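(* Let $S$ be a compact, metrizable, separable space, let $A$ be the generator of a Feller semigroup on $C(S)$ with resolvent $R_\lambda=(\lambda-A)^{-1}$, $\lambda>0$, and let $\ell_\lambda$, $\lambda>0$, be the Laplace transform of an exit law for $A$. For $x\in S$ let $m_x$ be the Borel sub-probability measure on $[0,\infty)$ such that $\ell_\lambda(x)=\int_{[0,\infty)}e^{-\lambda t}\,m_x(\mathrm dt)$ for all $\lambda>0$. Then $m_x(\{0\})=0$ for every $x\in S$.
   Context: A Feller semigroup is a strongly continuous semigroup of positive contractions on $C(S)$ (real continuous functions, sup norm) with $T(0)=I$, not necessarily conservative. A family $\ell_\lambda$, $\lambda>0$, is the Laplace transform of an exit law for $A$ if: (a) $(0,\infty)\ni\lambda\mapsto\ell_\lambda\in C(S)$ is locally bounded, non-negative and not identically zero (i.e. $\ell_\lambda\neq0$ for at least one $\lambda$); (b) $\lim_{\lambda\to0+}\ell_\lambda(x)\le1$ for each $x\in S$; (c) $(\lambda-\mu)R_\lambda\ell_\mu=\ell_\mu-\ell_\lambda$ for all $\lambda,\mu>0$. For such $\ell_\lambda$, for each $x$ the function $\lambda\mapsto\ell_\lambda(x)$ is completely monotone with $\lim_{\lambda\to0+}\ell_\lambda(x)\le 1$, so by Bernstein's theorem there is a (unique) Borel sub-probability measure $m_x$ on $[0,\infty)$ with $\ell_\lambda(x)=\int e^{-\lambda t}m_x(\mathrm dt)$. *)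

theory Defs
  imports "HOL-Analysis.Analysis" "HOL-Probability.Probability"
begin

text \<open>C(S): real continuous functions on a compact space S (all bounded), sup norm,
  represented by the Banach space of bounded continuous functions.\<close>

definition feller_semigroup ::
  "(real \<Rightarrow> ('a::metric_space \<Rightarrow>\<^sub>C real) \<Rightarrow>\<^sub>L ('a \<Rightarrow>\<^sub>C real)) \<Rightarrow> bool" where
  "feller_semigroup T \<longleftrightarrow>
     T 0 = id_blinfun \<and>
     (\<forall>s t. s \<ge> 0 \<longrightarrow> t \<ge> 0 \<longrightarrow> T (s + t) = T s o\<^sub>L T t) \<and>
     (\<forall>f. ((\<lambda>t. blinfun_apply (T t) f) \<longlongrightarrow> f) (at_right 0)) \<and>
     (\<forall>t f. t \<ge> 0 \<longrightarrow> (\<forall>x. apply_bcontfun f x \<ge> 0) \<longrightarrow>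
              (\<forall>x. apply_bcontfun (blinfun_apply (T t) f) x \<ge> 0)) \<and>
     (\<forall>t. t \<ge> 0 \<longrightarrow> norm (T t) \<le> 1)"

definition gen_dom :: "(real \<Rightarrow> ('a::metric_space \<Rightarrow>\<^sub>C real) \<Rightarrow>\<^sub>L ('a \<Rightarrow>\<^sub>C real))
    \<Rightarrow> ('a \<Rightarrow>\<^sub>C real) set" where
  "gen_dom T = {f. \<exists>g. ((\<lambda>t. (1 / t) *\<^sub>R (blinfun_apply (T t) f - f)) \<longlongrightarrow> g) (at_right 0)}"

definition gen :: "(real \<Rightarrow> ('a::metric_space \<Rightarrow>\<^sub>C real) \<Rightarrow>\<^sub>L ('a \<Rightarrow>\<^sub>C real))
    \<Rightarrow> ('a \<Rightarrow>\<^sub>C real) \<Rightarrow> ('a \<Rightarrow>\<^sub>C real)" where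
  "gen T f = Lim (at_right 0) (\<lambda>t. (1 / t) *\<^sub>R (blinfun_apply (T t) f - f))"

definition resolvent :: "(real \<Rightarrow> ('a::metric_space \<Rightarrow>\<^sub>C real) \<Rightarrow>\<^sub>L ('a \<Rightarrow>\<^sub>C real))
    \<Rightarrow> real \<Rightarrow> ('a \<Rightarrow>\<^sub>C real) \<Rightarrow> ('a \<Rightarrow>\<^sub>C real)" where
  "resolvent T lam f = (THE g. g \<in> gen_dom T \<and> lam *\<^sub>R g - gen T g = f)"

definition exit_law_LT :: "(real \<Rightarrow> ('a::metric_space \<Rightarrow>\<^sub>C real) \<Rightarrow>\<^sub>L ('a \<Rightarrow>\<^sub>C real))
    \<Rightarrow> (real \<Rightarrow> ('a \<Rightarrow>\<^sub>C real)) \<Rightarrow> bool" where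
  "exit_law_LT T l \<longleftrightarrow>
     (\<forall>lam>0. \<exists>e>0. \<exists>B. \<forall>mu. mu > 0 \<and> \<bar>mu - lam\<bar> < e \<longrightarrow> norm (l mu) \<le> B) \<and>
     (\<forall>lam>0. \<forall>x. apply_bcontfun (l lam) x \<ge> 0) \<and>
     (\<exists>lam>0. l lam \<noteq> 0) \<and>
     (\<forall>x. \<exists>L. L \<le> 1 \<and> ((\<lambda>lam. apply_bcontfun (l lam) x) \<longlongrightarrow> L) (at_right 0)) \<and>
     (\<forall>lam>0. \<forall>mu>0. (lam - mu) *\<^sub>R resolvent T lam (l mu) = l mu - l lam)"

end

theory Submission
  imports Defs
begin

lemma dq_right:
  fixes F :: "real \<Rightarrow> 'b::real_normed_vector"
  assumes d: "(F has_vector_derivative D) (at x within {x..B})" and xB: "x < B"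
  shows "((\<lambda>h. (1/h) *\<^sub>R (F (x+h) - F x)) \<longlongrightarrow> D) (at_right 0)"
proof -
  have "((\<lambda>y. (1 / norm(y - x)) *\<^sub>R (F y - (F x + (y - x) *\<^sub>R D))) \<longlongrightarrow> 0) (at_right x)"
    using d xB unfolding has_vector_derivative_def has_derivative_within
    by (simp add: at_within_Icc_at_right)
  then have "((\<lambda>h. (1 / norm((h+x) - x)) *\<^sub>R (F (h+x) - (F x + ((h+x) - x) *\<^sub>R D))) \<longlongrightarrow> 0) (at_right 0)"
    by (simp add: at_right_to_0[of x] filterlim_filtermap)
  then have "((\<lambda>h. (1 / norm((h+x) - x)) *\<^sub>R (F (h+x) - (F x + ((h+x) - x) *\<^sub>R D)) + D) \<longlongrightarrow> 0 + D) (at_right 0)"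
    by (intro tendsto_add tendsto_const)
  moreover have "\<forall>\<^sub>F h in at_right 0. (1 / norm((h+x) - x)) *\<^sub>R (F (h+x) - (F x + ((h+x) - x) *\<^sub>R D)) + D
      = (1/h) *\<^sub>R (F (x+h) - F x)"
  proof (rule eventually_mono[OF eventually_at_right_less])
    fix h :: real assume "0 < h"
    then show "(1 / norm((h+x) - x)) *\<^sub>R (F (h+x) - (F x + ((h+x) - x) *\<^sub>R D)) + D
      = (1/h) *\<^sub>R (F (x+h) - F x)"
      by (simp add: scaleR_diff_right add.commute diff_diff_eq[symmetric])
  qed
  ultimately show ?thesis
    by (simp add: tendsto_cong)
qed

lemma fs_id: "feller_semigroup T \<Longrightarrow> blinfun_apply (T 0) f = f"
proof -
  assume "feller_semigroup T"
  then have "T 0 = id_blinfun" unfolding feller_semigroup_def by blast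
  then show ?thesis by simp
qed

lemma fs_semi: "feller_semigroup T \<Longrightarrow> s \<ge> 0 \<Longrightarrow> t \<ge> 0 \<Longrightarrow>
   blinfun_apply (T (s + t)) f = blinfun_apply (T s) (blinfun_apply (T t) f)"
proof -
  assume "feller_semigroup T" "s \<ge> 0" "t \<ge> 0"
  then have "T (s + t) = T s o\<^sub>L T t" unfolding feller_semigroup_def by blast
  then show ?thesis by simp
qed

lemma fs_norm: "feller_semigroup T \<Longrightarrow> t \<ge> 0 \<Longrightarrow> norm (blinfun_apply (T t) f) \<le> norm f"
proof -
  assume "feller_semigroup T" "t \<ge> 0"
  then have "norm (T t) \<le> 1" unfolding feller_semigroup_def by blast
  then show ?thesis
    using order_trans[OF norm_blinfun mult_right_mono[of "norm (T t)" 1 "norm f"]] by simp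
qed

lemma fs_right: "feller_semigroup T \<Longrightarrow> ((\<lambda>t. blinfun_apply (T t) f) \<longlongrightarrow> f) (at_right 0)"
  unfolding feller_semigroup_def by blast

lemma fs_ucont:
  assumes fs: "feller_semigroup T" and e: "e > 0"
  shows "\<exists>d>0. \<forall>s t. s \<ge> 0 \<longrightarrow> t \<ge> 0 \<longrightarrow> \<bar>s - t\<bar> < d \<longrightarrow>
           norm (blinfun_apply (T s) f - blinfun_apply (T t) f) < e"
proof -
  have "\<forall>\<^sub>F h in at_right 0. dist (blinfun_apply (T h) f) f < e"
    using fs_right[OF fs] e by (simp add: tendsto_iff)
  then obtain b where b: "b > 0" "\<And>h. 0 < h \<Longrightarrow> h < b \<Longrightarrow> dist (blinfun_apply (T h) f) f < e"
    unfolding eventually_at_right_field by auto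
  have key: "norm (blinfun_apply (T s) f - blinfun_apply (T t) f) < e"
    if "0 \<le> t" "t < s" "s - t < b" for s t
  proof -
    have "blinfun_apply (T s) f - blinfun_apply (T t) f
        = blinfun_apply (T t) (blinfun_apply (T (s - t)) f - f)"
      using fs_semi[OF fs, of t "s - t" f] that by (simp add: blinfun.diff_right)
    also have "norm \<dots> \<le> norm (blinfun_apply (T (s - t)) f - f)"
      using fs_norm[OF fs] that by simp
    also have "\<dots> < e" using b(2)[of "s - t"] that by (simp add: dist_norm)
    finally show ?thesis .
  qed
  have all: "\<forall>s t. s \<ge> 0 \<longrightarrow> t \<ge> 0 \<longrightarrow> \<bar>s - t\<bar> < b \<longrightarrow>
           norm (blinfun_apply (T s) f - blinfun_apply (T t) f) < e"
  proof (intro allI impI)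
    fix s t :: real assume st: "s \<ge> 0" "t \<ge> 0" "\<bar>s - t\<bar> < b"
    consider "t < s" | "s < t" | "s = t" by linarith
    then show "norm (blinfun_apply (T s) f - blinfun_apply (T t) f) < e"
    proof cases
      case 1 then show ?thesis using key st by auto
    next
      case 2 then show ?thesis using key[of s t] st by (auto simp: norm_minus_commute)
    next
      case 3 then show ?thesis using e by simp
    qed
  qed
  show ?thesis using all b(1) by blast
qed

lemma fs_cont: "feller_semigroup T \<Longrightarrow> continuous_on {0..} (\<lambda>t. blinfun_apply (T t) f)"
  unfolding continuous_on_iff dist_norm
proof (intro ballI allI impI)
  fix x e :: real assume fs: "feller_semigroup T" and x: "x \<in> {0..}" and e: "0 < e"
  obtain d where d: "d > 0" "\<And>s t. s \<ge> 0 \<Longrightarrow> t \<ge> 0 \<Longrightarrow> \<bar>s - t\<bar> < d \<Longrightarrow>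
           norm (blinfun_apply (T s) f - blinfun_apply (T t) f) < e"
    using fs_ucont[OF fs e, of f] by blast
  show "\<exists>d>0. \<forall>x'\<in>{0..}. norm (x' - x) < d \<longrightarrow> norm (blinfun_apply (T x') f - blinfun_apply (T x) f) < e"
  proof (intro exI[of _ d] conjI ballI impI)
    fix y assume y: "y \<in> {0..}" "norm (y - x) < d"
    then show "norm (blinfun_apply (T y) f - blinfun_apply (T x) f) < e"
      using d(2)[of y x] x by (simp add: real_norm_def)
  qed (rule d(1))
qed

lemma fs_vcont: "feller_semigroup T \<Longrightarrow> S \<subseteq> {0..} \<Longrightarrow>
  continuous_on S (\<lambda>t. exp (- lam * t) *\<^sub>R blinfun_apply (T t) f)"
  apply (rule continuous_on_scaleR)
   apply (intro continuous_intros)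
  using continuous_on_subset fs_cont by blast

instance bcontfun :: (metric_space, banach) banach ..

lemma fh:
  fixes T :: "real \<Rightarrow> ('a::metric_space \<Rightarrow>\<^sub>C real) \<Rightarrow>\<^sub>L ('a \<Rightarrow>\<^sub>C real)"
    and lam :: real and f :: "'a \<Rightarrow>\<^sub>C real"
  assumes fs: "feller_semigroup T" and tau: "tau > 0"
  defines "v \<equiv> \<lambda>t. exp (- lam * t) *\<^sub>R blinfun_apply (T t) f"
  defines "W \<equiv> integral {0..tau} v"
  shows "((\<lambda>h. (1/h) *\<^sub>R (blinfun_apply (T h) W - W)) \<longlongrightarrow> lam *\<^sub>R W + v tau - f) (at_right 0)"
proof -
  define B where "B = tau + 1"
  define F where "F = (\<lambda>u. integral {0..u} v)"
  have vc: "continuous_on {0..B} v" unfolding v_def by (rule fs_vcont[OF fs]) auto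
  have vi: "v integrable_on {0..B}" by (rule integrable_continuous_interval[OF vc])
  have vsub: "v integrable_on {a..b}" if "0 \<le> a" "b \<le> B" for a b
  proof (cases "a \<le> b")
    case True then show ?thesis using integrable_subinterval_real[OF vi] that by auto
  next
    case False then show ?thesis by (simp add: integrable_on_empty)
  qed
  have der: "(F has_vector_derivative v x) (at x within {x..B})" if "0 \<le> x" "x \<le> B" for x
    unfolding F_def
    by (rule has_vector_derivative_within_subset[OF integral_has_vector_derivative[OF vc]]) (use that in auto)
  have dq: "((\<lambda>h. (1/h) *\<^sub>R (F (x+h) - F x)) \<longlongrightarrow> v x) (at_right 0)" if "0 \<le> x" "x < B" for x
    using dq_right[OF der] that by auto
  have fc: "((\<lambda>h. F (x+h)) \<longlongrightarrow> F x) (at_right 0)" if "0 \<le> x" "x < B" for x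
  proof -
    have "((\<lambda>h. F x + h *\<^sub>R ((1/h) *\<^sub>R (F (x+h) - F x))) \<longlongrightarrow> F x + 0 *\<^sub>R v x) (at_right 0)"
      by (intro tendsto_intros dq that tendsto_ident_at)
    moreover have "\<forall>\<^sub>F h in at_right 0. F x + h *\<^sub>R ((1/h) *\<^sub>R (F (x+h) - F x)) = F (x+h)"
      by (rule eventually_mono[OF eventually_at_right_less]) simp
    ultimately show ?thesis by (simp add: tendsto_cong)
  qed
  have F0: "F 0 = 0" unfolding F_def by simp
  have WF: "W = F tau" unfolding W_def F_def ..
  have v0: "v 0 = f" unfolding v_def using fs_id[OF fs] by simp
  have ex: "((\<lambda>h. (exp (lam * h) - 1) / h) \<longlongrightarrow> lam) (at_right 0)"
  proof -
    have "((\<lambda>h. exp (lam * h)) has_field_derivative exp (lam * 0) * lam) (at 0)"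
      by (auto intro!: derivative_eq_intros)
    then have "((\<lambda>y. (exp (lam * y) - exp (lam * 0)) / (y - 0)) \<longlongrightarrow> exp (lam * 0) * lam) (at 0)"
      unfolding has_field_derivative_iff by simp
    then show ?thesis using filterlim_at_split by force
  qed
  have key: "blinfun_apply (T h) W = exp (lam * h) *\<^sub>R (F (tau + h) - F h)" if h: "0 < h" "h < 1" for h
  proof -
    have "blinfun_apply (T h) W = integral {0..tau} (blinfun_apply (T h) \<circ> v)"
      unfolding W_def
      by (rule integral_linear[symmetric]) (use vsub[of 0 tau] B_def in \<open>auto intro: bounded_linear_blinfun_apply\<close>)
    also have "\<dots> = integral {0..tau} (\<lambda>t. exp (lam * h) *\<^sub>R v (h + t))"
    proof (rule integral_cong)
      fix t assume "t \<in> {0..tau}"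
      then have "blinfun_apply (T h) (blinfun_apply (T t) f) = blinfun_apply (T (h + t)) f"
        using fs_semi[OF fs, of h t f] h by simp
      moreover have "exp (- lam * t) = exp (lam * h) * exp (- lam * (h + t))"
        by (simp add: exp_add[symmetric] algebra_simps)
      ultimately show "(blinfun_apply (T h) \<circ> v) t = exp (lam * h) *\<^sub>R v (h + t)"
        unfolding v_def by (simp add: blinfun.scaleR_right)
    qed
    also have "\<dots> = exp (lam * h) *\<^sub>R integral {0..tau} (v \<circ> (+) h)"
      by (simp add: o_def)
    also have "integral {0..tau} (v \<circ> (+) h) = integral {0+h..tau+h} v"
      by (rule integral_shift_Icc_real)
    also have "\<dots> = F (tau + h) - F h"
      using Henstock_Kurzweil_Integration.integral_combine[where a=0 and c=h and b="tau+h" and f=v] vsub[of 0 "tau + h"] h tau B_def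
      unfolding F_def by (simp add: algebra_simps)
    finally show ?thesis .
  qed
  have lim: "((\<lambda>h. ((exp (lam * h) - 1) / h) *\<^sub>R (F (tau + h) - F (0 + h))
              + (1/h) *\<^sub>R (F (tau + h) - F tau) - (1/h) *\<^sub>R (F (0 + h) - F 0))
        \<longlongrightarrow> lam *\<^sub>R (F tau - F 0) + v tau - v 0) (at_right 0)"
    using tau B_def by (intro tendsto_intros ex fc dq) auto
  have ev: "\<forall>\<^sub>F h in at_right 0. ((exp (lam * h) - 1) / h) *\<^sub>R (F (tau + h) - F (0 + h))
              + (1/h) *\<^sub>R (F (tau + h) - F tau) - (1/h) *\<^sub>R (F (0 + h) - F 0)
          = (1/h) *\<^sub>R (blinfun_apply (T h) W - W)"
  proof -
    have "\<forall>\<^sub>F h in at_right (0::real). h < 1"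
      unfolding eventually_at_right_field by (intro exI[of _ 1]) auto
    then show ?thesis
    proof (rule eventually_mono[OF eventually_conj[OF eventually_at_right_less]], elim conjE)
      fix h :: real assume h: "0 < h" "h < 1"
      show "((exp (lam * h) - 1) / h) *\<^sub>R (F (tau + h) - F (0 + h))
              + (1/h) *\<^sub>R (F (tau + h) - F tau) - (1/h) *\<^sub>R (F (0 + h) - F 0)
          = (1/h) *\<^sub>R (blinfun_apply (T h) W - W)"
        unfolding WF F0 key[OF h, unfolded WF] using h
        by (simp add: divide_inverse scaleR_diff_right scaleR_diff_left algebra_simps)
    qed
  qed
  show ?thesis
    using tendsto_cong[OF ev] lim unfolding F0 v0 WF by simp
qed

lemma dom_lim: "f \<in> gen_dom T \<Longrightarrow>
   ((\<lambda>t. (1 / t) *\<^sub>R (blinfun_apply (T t) f - f)) \<longlongrightarrow> gen T f) (at_right 0)"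
  unfolding gen_dom_def gen_def using tendsto_Lim[OF trivial_limit_at_right_real] by blast

lemma gen_eq: "((\<lambda>t. (1 / t) *\<^sub>R (blinfun_apply (T t) f - f)) \<longlongrightarrow> g) (at_right 0) \<Longrightarrow>
   f \<in> gen_dom T \<and> gen T f = g"
  unfolding gen_dom_def gen_def using tendsto_Lim[OF trivial_limit_at_right_real] by blast

lemma dom_diff:
  assumes "f \<in> gen_dom T" "g \<in> gen_dom T"
  shows "f - g \<in> gen_dom T \<and> gen T (f - g) = gen T f - gen T g"
proof (rule gen_eq)
  have "((\<lambda>t. (1 / t) *\<^sub>R (blinfun_apply (T t) f - f) - (1 / t) *\<^sub>R (blinfun_apply (T t) g - g))
        \<longlongrightarrow> gen T f - gen T g) (at_right 0)"
    by (intro tendsto_diff dom_lim assms)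
  moreover have "\<And>t. (1 / t) *\<^sub>R (blinfun_apply (T t) (f - g) - (f - g)) = (1 / t) *\<^sub>R (blinfun_apply (T t) f - f) - (1 / t) *\<^sub>R (blinfun_apply (T t) g - g)"
    by (simp add: blinfun.diff_right scaleR_diff_right)
  ultimately show "((\<lambda>t. (1 / t) *\<^sub>R (blinfun_apply (T t) (f - g) - (f - g))) \<longlongrightarrow> gen T f - gen T g) (at_right 0)"
    by simp
qed

lemma dom_scale:
  assumes "f \<in> gen_dom T"
  shows "c *\<^sub>R f \<in> gen_dom T \<and> gen T (c *\<^sub>R f) = c *\<^sub>R gen T f"
proof (rule gen_eq)
  have "((\<lambda>t. c *\<^sub>R ((1 / t) *\<^sub>R (blinfun_apply (T t) f - f)))
        \<longlongrightarrow> c *\<^sub>R gen T f) (at_right 0)"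
    by (intro tendsto_scaleR tendsto_const dom_lim assms)
  moreover have "\<And>t. (1 / t) *\<^sub>R (blinfun_apply (T t) (c *\<^sub>R f) - c *\<^sub>R f) = c *\<^sub>R ((1 / t) *\<^sub>R (blinfun_apply (T t) f - f))"
    by (simp add: blinfun.scaleR_right scaleR_diff_right)
  ultimately show "((\<lambda>t. (1 / t) *\<^sub>R (blinfun_apply (T t) (c *\<^sub>R f) - c *\<^sub>R f)) \<longlongrightarrow> c *\<^sub>R gen T f) (at_right 0)"
    by simp
qed

lemma diss:
  assumes fs: "feller_semigroup T" and g: "g \<in> gen_dom T" and lam: "lam > 0"
  shows "lam * norm g \<le> norm (lam *\<^sub>R g - gen T g)"
proof (rule tendsto_lowerbound)
  show "((\<lambda>t. norm (lam *\<^sub>R g - (1 / t) *\<^sub>R (blinfun_apply (T t) g - g))) \<longlongrightarrow> norm (lam *\<^sub>R g - gen T g)) (at_right 0)"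
    by (intro tendsto_norm tendsto_diff tendsto_const dom_lim g)
  show "\<forall>\<^sub>F t in at_right 0. lam * norm g \<le> norm (lam *\<^sub>R g - (1 / t) *\<^sub>R (blinfun_apply (T t) g - g))"
  proof (rule eventually_mono[OF eventually_at_right_less])
    fix t :: real assume t: "0 < t"
    have eq: "lam *\<^sub>R g - (1 / t) *\<^sub>R (blinfun_apply (T t) g - g) = (lam + 1/t) *\<^sub>R g - (1/t) *\<^sub>R blinfun_apply (T t) g"
      by (simp add: scaleR_diff_right scaleR_add_left)
    have "norm ((lam + 1/t) *\<^sub>R g) - norm ((1/t) *\<^sub>R blinfun_apply (T t) g) \<le> norm ((lam + 1/t) *\<^sub>R g - (1/t) *\<^sub>R blinfun_apply (T t) g)"
      by (rule norm_triangle_ineq2)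
    moreover have "norm ((lam + 1/t) *\<^sub>R g) = (lam + 1/t) * norm g" using t lam by simp
    moreover have "norm ((1/t) *\<^sub>R blinfun_apply (T t) g) \<le> (1/t) * norm g"
      using fs_norm[OF fs, of t g] t by (simp add: divide_right_mono)
    ultimately show "lam * norm g \<le> norm (lam *\<^sub>R g - (1 / t) *\<^sub>R (blinfun_apply (T t) g - g))"
      unfolding eq by (simp add: distrib_right)
  qed
qed (rule trivial_limit_at_right_real)

lemma sol_unique:
  assumes fs: "feller_semigroup T" and lam: "lam > 0"
    and g: "g \<in> gen_dom T" "lam *\<^sub>R g - gen T g = f"
    and g': "g' \<in> gen_dom T" "lam *\<^sub>R g' - gen T g' = f"
  shows "g' = g"
proof -
  have d: "g' - g \<in> gen_dom T" "gen T (g' - g) = gen T g' - gen T g" using dom_diff[OF g'(1) g(1)] by auto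
  have "lam *\<^sub>R (g' - g) - gen T (g' - g) = (lam *\<^sub>R g' - gen T g') - (lam *\<^sub>R g - gen T g)"
    unfolding d(2) scaleR_diff_right by simp
  also have "\<dots> = 0" using g(2) g'(2) by simp
  finally have "lam * norm (g' - g) \<le> 0" using diss[OF fs d(1) lam] by simp
  then have "norm (g' - g) \<le> 0" using lam by (simp add: mult_le_0_iff)
  then show ?thesis by simp
qed

lemma resolvent_eq:
  assumes fs: "feller_semigroup T" and lam: "lam > 0"
    and g: "g \<in> gen_dom T" "lam *\<^sub>R g - gen T g = f"
  shows "resolvent T lam f = g"
  unfolding resolvent_def
proof (rule the_equality)
  show "g \<in> gen_dom T \<and> lam *\<^sub>R g - gen T g = f" using g by blast
  fix g' assume "g' \<in> gen_dom T \<and> lam *\<^sub>R g' - gen T g' = f"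
  then show "g' = g" using sol_unique[OF fs lam g] by blast
qed

lemma sol_exists:
  fixes T :: "real \<Rightarrow> ('a::metric_space \<Rightarrow>\<^sub>C real) \<Rightarrow>\<^sub>L ('a \<Rightarrow>\<^sub>C real)"
    and f :: "'a \<Rightarrow>\<^sub>C real"
  assumes fs: "feller_semigroup T" and lam: "lam > 0"
  shows "\<exists>g. g \<in> gen_dom T \<and> lam *\<^sub>R g - gen T g = f"
proof -
  define q where "q = exp (- lam)"
  have q: "0 \<le> q" "q < 1" unfolding q_def using lam by auto
  define P where "P = (\<lambda>h. f + q *\<^sub>R blinfun_apply (T 1) h)"
  have "\<forall>x y. dist (P x) (P y) \<le> q * dist x y"
  proof (intro allI)
    fix x y
    have "dist (P x) (P y) = norm (q *\<^sub>R blinfun_apply (T 1) (x - y))"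
      unfolding P_def dist_norm by (simp add: blinfun.diff_right scaleR_diff_right)
    also have "\<dots> = q * norm (blinfun_apply (T 1) (x - y))" using q by simp
    also have "\<dots> \<le> q * norm (x - y)"
      using fs_norm[OF fs, of 1 "x - y"] q by (simp add: mult_left_mono)
    finally show "dist (P x) (P y) \<le> q * dist x y" by (simp add: dist_norm)
  qed
  then obtain h where h: "P h = h" using banach_fix_type[OF q] by blast
  define W where "W = integral {0..1} (\<lambda>t. exp (- lam * t) *\<^sub>R blinfun_apply (T t) h)"
  have "W \<in> gen_dom T \<and> gen T W = lam *\<^sub>R W + exp (- lam * 1) *\<^sub>R blinfun_apply (T 1) h - h"
    unfolding W_def by (rule gen_eq[OF fh[OF fs, where tau=1 and lam=lam and f=h]]) simp
  then have W: "W \<in> gen_dom T" "gen T W = lam *\<^sub>R W + q *\<^sub>R blinfun_apply (T 1) h - h"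
    unfolding q_def by auto
  have "lam *\<^sub>R W - gen T W = h - q *\<^sub>R blinfun_apply (T 1) h" unfolding W(2) by simp
  also have "\<dots> = f" using h unfolding P_def by (metis add_diff_cancel_right')
  finally show ?thesis using W(1) by blast
qed

lemma dense:
  fixes T :: "real \<Rightarrow> ('a::metric_space \<Rightarrow>\<^sub>C real) \<Rightarrow>\<^sub>L ('a \<Rightarrow>\<^sub>C real)"
    and f :: "'a \<Rightarrow>\<^sub>C real"
  assumes fs: "feller_semigroup T" and e: "e > 0"
  shows "\<exists>k \<in> gen_dom T. norm (f - k) \<le> e"
proof -
  obtain d where d: "d > 0" "\<And>s t. s \<ge> 0 \<Longrightarrow> t \<ge> 0 \<Longrightarrow> \<bar>s - t\<bar> < d \<Longrightarrow>
           norm (blinfun_apply (T s) f - blinfun_apply (T t) f) < e"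
    using fs_ucont[OF fs e, of f] by blast
  define tau where "tau = d / 2"
  have tau: "tau > 0" unfolding tau_def using d by simp
  define W where "W = integral {0..tau} (\<lambda>t. exp (- 0 * t) *\<^sub>R blinfun_apply (T t) f)"
  have "W \<in> gen_dom T"
    unfolding W_def by (rule conjunct1[OF gen_eq[OF fh[OF fs tau, where lam=0 and f=f]]])
  then have k: "(1/tau) *\<^sub>R W \<in> gen_dom T" using dom_scale by blast
  have W': "W = integral {0..tau} (\<lambda>t. blinfun_apply (T t) f)" unfolding W_def by simp
  have c: "continuous_on {0..tau} (\<lambda>t. blinfun_apply (T t) f)"
    using continuous_on_subset[OF fs_cont[OF fs]] by auto
  have "integral {0..tau} (\<lambda>t. f - blinfun_apply (T t) f) = tau *\<^sub>R f - W"
    unfolding W' using integral_diff[OF integrable_const_ivl integrable_continuous_interval[OF c]] tau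
    by simp
  moreover have "norm (integral {0..tau} (\<lambda>t. f - blinfun_apply (T t) f)) \<le> e * (tau - 0)"
  proof (rule integral_bound)
    show "continuous_on {0..tau} (\<lambda>t. f - blinfun_apply (T t) f)"
      by (intro continuous_on_diff continuous_on_const c)
    fix t assume t: "t \<in> {0..tau}"
    have "norm (blinfun_apply (T t) f - blinfun_apply (T 0) f) < e"
      using d(2)[of t 0] t tau_def d(1) by auto
    then show "norm (f - blinfun_apply (T t) f) \<le> e"
      using fs_id[OF fs, of f] by (simp add: norm_minus_commute)
  qed (use tau in auto)
  ultimately have "norm (tau *\<^sub>R f - W) \<le> e * tau" by simp
  moreover have "f - (1/tau) *\<^sub>R W = (1/tau) *\<^sub>R (tau *\<^sub>R f - W)"
    using tau by (simp add: scaleR_diff_right)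
  ultimately have "norm (f - (1/tau) *\<^sub>R W) \<le> e"
    using tau by (simp add: pos_divide_le_eq mult.commute)
  then show ?thesis using k by blast
qed

lemma meas_le:
  fixes M :: "real measure"
  assumes sM: "sets M = sets (restrict_space borel {0..})" and sp: "subprob_space M" and lam: "lam > 0"
  shows "measure M {0} \<le> (\<integral>t. exp (- lam * t) \<partial>M)"
proof -
  interpret subprob_space M by (rule sp)
  have spM: "space M = {0..}" using sets_eq_imp_space_eq[OF sM] by simp
  have "(\<lambda>t::real. exp (- lam * t)) \<in> borel_measurable borel" by measurable
  then have "(\<lambda>t::real. exp (- lam * t)) \<in> borel_measurable (restrict_space borel {0..})"
    by (rule measurable_restrict_space1)
  then have meas: "(\<lambda>t::real. exp (- lam * t)) \<in> borel_measurable M"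
    using measurable_cong_sets[OF sM refl, of borel] by blast
  have bnd: "AE t in M. norm (exp (- lam * t)) \<le> 1"
  proof (rule AE_I2)
    fix t assume "t \<in> space M"
    then have "t \<ge> 0" using spM by simp
    then show "norm (exp (- lam * t)) \<le> 1" using lam by simp
  qed
  have int: "integrable M (\<lambda>t. exp (- lam * t))"
    by (rule integrable_const_bound[OF bnd meas])
  have "measure M {0} = (\<integral>t. indicator {0} t \<partial>M)"
    using spM by (simp add: Int_absorb2)
  also have "\<dots> \<le> (\<integral>t. exp (- lam * t) \<partial>M)"
    by (rule integral_mono'[OF int]) (auto simp: indicator_def)
  finally show ?thesis .
qed

lemma small:
  fixes T :: "real \<Rightarrow> ('a::metric_space \<Rightarrow>\<^sub>C real) \<Rightarrow>\<^sub>L ('a \<Rightarrow>\<^sub>C real)"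
    and l :: "real \<Rightarrow> ('a \<Rightarrow>\<^sub>C real)"
  assumes fs: "feller_semigroup T"
    and c: "\<forall>lam>0. \<forall>mu>0. (lam - mu) *\<^sub>R resolvent T lam (l mu) = l mu - l lam"
    and e: "e > 0"
  shows "\<exists>lam>0. norm (l lam) \<le> e"
proof -
  define f where "f = l 1"
  obtain k where k: "k \<in> gen_dom T" "norm (f - k) \<le> e/4"
    using dense[OF fs, of "e/4" f] e by auto
  define lam where "lam = 4 * (norm (gen T k) + norm f) / e + 2"
  have lam1: "lam > 1" unfolding lam_def using e by (simp add: add_pos_nonneg)
  then have lam0: "lam > 0" by simp
  have b1: "norm (gen T k) / lam \<le> e/4" and b2: "norm f / lam \<le> e/4"
  proof -
    have "4 * (norm (gen T k) + norm f) \<le> e * lam"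
      unfolding lam_def using e by (simp add: field_simps)
    moreover have "0 \<le> norm (gen T k)" "0 \<le> norm f" by simp_all
    ultimately have "norm (gen T k) * 4 \<le> e * lam" "norm f * 4 \<le> e * lam"
      by (smt (verit))+
    then show "norm (gen T k) / lam \<le> e/4" "norm f / lam \<le> e/4"
      using lam0 by (simp_all add: pos_divide_le_eq)
  qed
  obtain g where g: "g \<in> gen_dom T" "lam *\<^sub>R g - gen T g = f" using sol_exists[OF fs lam0] by blast
  obtain g' where g': "g' \<in> gen_dom T" "lam *\<^sub>R g' - gen T g' = k" using sol_exists[OF fs lam0] by blast
  obtain p where p: "p \<in> gen_dom T" "lam *\<^sub>R p - gen T p = gen T k" using sol_exists[OF fs lam0] by blast
  have "resolvent T lam f = g" by (rule resolvent_eq[OF fs lam0 g])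
  moreover have "(lam - 1) *\<^sub>R resolvent T lam (l 1) = l 1 - l lam" using c lam0 by simp
  ultimately have "(lam - 1) *\<^sub>R g = f - l lam" unfolding f_def by simp
  then have ll: "l lam = (f - lam *\<^sub>R g) + g" by (simp add: scaleR_diff_left algebra_simps)
  have ng: "norm g \<le> e/4"
  proof -
    have "lam * norm g \<le> norm f" using diss[OF fs g(1) lam0] g(2) by simp
    then have "norm g \<le> norm f / lam" using lam0 by (simp add: pos_le_divide_eq mult.commute)
    then show ?thesis using b2 by linarith
  qed
  have d1: "lam *\<^sub>R g' - k \<in> gen_dom T" "gen T (lam *\<^sub>R g' - k) = lam *\<^sub>R gen T g' - gen T k"
    using dom_diff[OF conjunct1[OF dom_scale[OF g'(1)]] k(1)] dom_scale[OF g'(1), of lam] by auto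
  have "lam *\<^sub>R (lam *\<^sub>R g' - k) - gen T (lam *\<^sub>R g' - k) = lam *\<^sub>R (lam *\<^sub>R g' - gen T g') - lam *\<^sub>R k + gen T k"
    unfolding d1(2) by (simp add: scaleR_diff_right)
  also have "\<dots> = gen T k" unfolding g'(2) by simp
  finally have "p = lam *\<^sub>R g' - k" using sol_unique[OF fs lam0 p] d1(1) by blast
  moreover have "lam * norm p \<le> norm (gen T k)" using diss[OF fs p(1) lam0] p(2) by simp
  then have "norm p \<le> norm (gen T k) / lam" using lam0 by (simp add: pos_le_divide_eq mult.commute)
  ultimately have "norm (k - lam *\<^sub>R g') \<le> norm (gen T k) / lam" by (simp add: norm_minus_commute)
  then have n2: "norm (k - lam *\<^sub>R g') \<le> e/4" using b1 by linarith
  have d2: "g - g' \<in> gen_dom T" "gen T (g - g') = gen T g - gen T g'" using dom_diff[OF g(1) g'(1)] by auto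
  have "lam *\<^sub>R (g - g') - gen T (g - g') = (lam *\<^sub>R g - gen T g) - (lam *\<^sub>R g' - gen T g')"
    unfolding d2(2) by (simp add: scaleR_diff_right)
  then have "lam * norm (g - g') \<le> norm (f - k)" using diss[OF fs d2(1) lam0] g(2) g'(2) by simp
  then have n3: "norm (lam *\<^sub>R g' - lam *\<^sub>R g) \<le> e/4"
    using k(2) lam0 by (simp add: scaleR_diff_right[symmetric] norm_minus_commute)
  have "norm (f - lam *\<^sub>R g) \<le> norm (f - k) + norm (k - lam *\<^sub>R g') + norm (lam *\<^sub>R g' - lam *\<^sub>R g)"
    using norm_triangle_ineq[of "f - k" "k - lam *\<^sub>R g'"] norm_triangle_ineq[of "(f - k) + (k - lam *\<^sub>R g')" "lam *\<^sub>R g' - lam *\<^sub>R g"]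
    by simp
  then have "norm (l lam) \<le> e/4 + e/4 + e/4 + e/4"
    using ll norm_triangle_ineq[of "f - lam *\<^sub>R g" g] k(2) n2 n3 ng by simp
  then show ?thesis using lam0 by auto
qed

theorem proposition2:
  fixes T :: "real \<Rightarrow> ('a::metric_space \<Rightarrow>\<^sub>C real) \<Rightarrow>\<^sub>L ('a \<Rightarrow>\<^sub>C real)"
    and l :: "real \<Rightarrow> ('a \<Rightarrow>\<^sub>C real)"
    and m :: "'a \<Rightarrow> real measure"
  assumes "compact (UNIV :: 'a set)"
    and "feller_semigroup T"
    and "exit_law_LT T l"
    and "\<And>x. sets (m x) = sets (restrict_space borel {0..})"
    and "\<And>x. subprob_space (m x)"
    and "\<And>x lam. lam > 0 \<Longrightarrow>
           apply_bcontfun (l lam) x = (\<integral>t. exp (- lam * t) \<partial>(m x))"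
  shows "\<forall>x. measure (m x) {0} = 0"
proof
  fix x
  have c: "\<forall>lam>0. \<forall>mu>0. (lam - mu) *\<^sub>R resolvent T lam (l mu) = l mu - l lam"
    using assms(3) unfolding exit_law_LT_def by blast
  have "measure (m x) {0} \<le> e" if e: "e > 0" for e
  proof -
    obtain lam where lam: "lam > 0" "norm (l lam) \<le> e" using small[OF assms(2) c e] by blast
    have "measure (m x) {0} \<le> (\<integral>t. exp (- lam * t) \<partial>(m x))"
      by (rule meas_le[OF assms(4) assms(5) lam(1)])
    also have "\<dots> = apply_bcontfun (l lam) x" using assms(6)[OF lam(1)] by simp
    also have "\<dots> \<le> norm (l lam)" using norm_bounded[of "l lam" x] by simp
    finally show ?thesis using lam(2) by simp
  qed
  then have "measure (m x) {0} \<le> 0" by (meson dense_ge)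
  then show "measure (m x) {0} = 0" using measure_nonneg[of "m x" "{0}"] by simp
qed

end
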